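(* Let $E\in C^\infty[-1,1]$. For every $n\ge1$, $l\in\mathbb Z$ and $s\in\mathbb Z_{\ge0}$, $$\sum_{t\ge0}\phi_{n-1}(s,t)\,\Psi^n_{r_n-l}(t)=\Psi^{n-1}_{r_{n-1}-l}(s).$$
   Context: For $n\ge0$: $r_n=\lfloor(n+1)/2\rfloor$, $\alpha_n=1/2$ if $n$ even and $-1/2$ if $n$ odd, and $\phi_n(s,t)=2\cdot1_{(s<t)}$ if $n$ even, $\phi_n(s,t)=1_{(s\le t)}$ if $n$ odd ($s,t\in\mathbb Z_{\ge0}$). Chebyshev polynomials: $J_{0,\pm1/2}=1$, $J_{1,1/2}(x)=2x$, $J_{1,-1/2}(x)=2x-1$, both satisfying $xp_k=\frac12p_{k+1}+\frac12p_{k-1}$, $k\ge1$. $\langle f,g\rangle_\alpha=\frac{2^{\alpha+1/2}}{\pi}\int_{-1}^1fg(1-x)^\alpha(1+x)^{1/2}dx$. Taylor remainder about $1$: $R^E_m=E$ for $m\le0$ and $R^E_m(x)=E(x)-\sum_{k=0}^{m-1}\frac{E^{(k)}(1)}{k!}(x-1)^k$ for $m\ge1$. Define $\Psi^n_{r_n-l}(s)=\langle J_{s,\alpha_n},(x-1)^{r_n-l}R^E_{l-r_n}\rangle_{\alpha_n}$. *)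

theory Defs
  imports "HOL-Analysis.Analysis"
begin

definition r_idx :: "nat \<Rightarrow> nat" where
  "r_idx n = (n + 1) div 2"

definition alpha_idx :: "nat \<Rightarrow> real" where
  "alpha_idx n = (if even n then 1/2 else -1/2)"

definition phi_idx :: "nat \<Rightarrow> nat \<Rightarrow> nat \<Rightarrow> real" where
  "phi_idx n s t = (if even n then 2 * (if s < t then 1 else 0) else (if s \<le> t then 1 else 0))"

text \<open>Chebyshev polynomials J_{k,alpha} for alpha = 1/2 (second kind) and alpha = -1/2
  (third kind), via x p_k = 1/2 p_{k+1} + 1/2 p_{k-1}.\<close>
fun chebJ :: "nat \<Rightarrow> real \<Rightarrow> real \<Rightarrow> real" where
  "chebJ 0 \<alpha> x = 1"
| "chebJ (Suc 0) \<alpha> x = (if \<alpha> = 1/2 then 2 * x else 2 * x - 1)"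
| "chebJ (Suc (Suc k)) \<alpha> x = 2 * x * chebJ (Suc k) \<alpha> x - chebJ k \<alpha> x"

definition wip :: "real \<Rightarrow> (real \<Rightarrow> real) \<Rightarrow> (real \<Rightarrow> real) \<Rightarrow> real" where
  "wip \<alpha> f g = 2 powr (\<alpha> + 1/2) / pi *
     integral {-1..1} (\<lambda>x. f x * g x * (1 - x) powr \<alpha> * (1 + x) powr (1/2))"

text \<open>E is C^\<infinity> on [-1,1] with derivative family D (D k = k-th derivative of E,
  one-sided at the endpoints).\<close>
definition smooth_with_derivs :: "(real \<Rightarrow> real) \<Rightarrow> (nat \<Rightarrow> real \<Rightarrow> real) \<Rightarrow> bool" where
  "smooth_with_derivs E D \<longleftrightarrow> (\<forall>x\<in>{-1..1}. D 0 x = E x) \<and>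
     (\<forall>k. \<forall>x\<in>{-1..1}. (D k has_real_derivative D (Suc k) x) (at x within {-1..1}))"

definition taylor_rem :: "(real \<Rightarrow> real) \<Rightarrow> (nat \<Rightarrow> real \<Rightarrow> real) \<Rightarrow> int \<Rightarrow> real \<Rightarrow> real" where
  "taylor_rem E D m x = (if m \<le> 0 then E x
     else E x - (\<Sum>k<nat m. D k 1 / fact k * (x - 1) ^ k))"

definition Psi :: "(real \<Rightarrow> real) \<Rightarrow> (nat \<Rightarrow> real \<Rightarrow> real) \<Rightarrow> nat \<Rightarrow> int \<Rightarrow> nat \<Rightarrow> real" where
  "Psi E D n m s = wip (alpha_idx n) (chebJ s (alpha_idx n))
      (\<lambda>x. (x - 1) powi m * taylor_rem E D (- m) x)"

end

theory Submission
  imports Defs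
begin


lemma chebJ_V_U_aux: "chebJ t (-1/2) x = chebJ t (1/2) x - (if t = 0 then 0 else chebJ (t-1) (1/2) x)
   \<and> chebJ (Suc t) (-1/2) x = chebJ (Suc t) (1/2) x - chebJ t (1/2) x"
proof (induction t)
  case 0 then show ?case by simp
next
  case (Suc t)
  have v: "chebJ (Suc (Suc t)) (-1/2) x = 2*x*chebJ (Suc t) (-1/2) x - chebJ t (-1/2) x" by simp
  have u: "chebJ (Suc (Suc t)) (1/2) x = 2*x*chebJ (Suc t) (1/2) x - chebJ t (1/2) x" by simp
  show ?case
  proof (cases t)
    case 0 then show ?thesis by (simp add: algebra_simps)
  next
    case (Suc t')
    have u2: "chebJ (Suc t) (1/2) x = 2*x*chebJ t (1/2) x - chebJ t' (1/2) x" using Suc by simp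
    have i1: "chebJ t (-1/2) x = chebJ t (1/2) x - chebJ t' (1/2) x" using Suc.IH Suc by simp
    have i2: "chebJ (Suc t) (-1/2) x = chebJ (Suc t) (1/2) x - chebJ t (1/2) x" using Suc.IH by simp
    have alg: "\<And>V2 V1 V0 U2 U1 U0 Um. V2 = 2*x*V1 - V0 \<Longrightarrow> U2 = 2*x*U1 - U0 \<Longrightarrow> U1 = 2*x*U0 - Um
       \<Longrightarrow> V0 = U0 - Um \<Longrightarrow> V1 = U1 - U0 \<Longrightarrow> V2 = U2 - U1" by (simp add: algebra_simps)
    show ?thesis using alg[OF v u u2 i1 i2] i2 by simp
  qed
qed

lemma chebJ_V_U: "chebJ (Suc t) (-1/2) x = chebJ (Suc t) (1/2) x - chebJ t (1/2) x"
  using chebJ_V_U_aux by blast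

lemma chebJ_tel: "2 * (1 - x) * chebJ t (1/2) x = chebJ t (-1/2) x - chebJ (Suc t) (-1/2) x"
proof (cases t)
  case 0 then show ?thesis by simp
next
  case (Suc t')
  show ?thesis using chebJ_V_U[of t' x] chebJ_V_U[of "Suc t'" x] Suc
    by (simp add: algebra_simps)
qed

lemma chebJ_cont_aux: "continuous_on S (chebJ k a) \<and> continuous_on S (chebJ (Suc k) a)"
  proof (induction k)
  case 0 show ?case by (cases "a = 1/2") (auto intro!: continuous_intros)
next
  case (Suc k) then show ?case by (auto intro!: continuous_intros)
qed

lemma chebJ_cont: "continuous_on S (chebJ k a)"
  using chebJ_cont_aux by blast

lemma chebJ_U_trig_aux: "chebJ k (1/2) (cos th) * sin th = sin (real (Suc k) * th) \<and>
   chebJ (Suc k) (1/2) (cos th) * sin th = sin (real (Suc (Suc k)) * th)"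
proof (induction k)
  case 0
  have "sin (2 * th) = 2 * sin th * cos th" by (rule sin_double)
  then show ?case by (simp add: algebra_simps)
next
  case (Suc j)
  have "sin (real (Suc (Suc (Suc j))) * th) = 2 * cos th * sin (real (Suc (Suc j)) * th) - sin (real (Suc j) * th)"
  proof -
    have g: "\<And>u. sin (u + th) + sin (u - th) = 2 * cos th * sin u" by (simp add: sin_add sin_diff)
    have "sin (real (Suc (Suc (Suc j))) * th) = sin (real (Suc (Suc j)) * th + th)"
      by (simp add: algebra_simps)
    moreover have "sin (real (Suc j) * th) = sin (real (Suc (Suc j)) * th - th)"
      by (simp add: algebra_simps)
    ultimately show ?thesis using g[of "real (Suc (Suc j)) * th"] by linarith
  qed
  then show ?case using Suc by (simp add: algebra_simps)
qed

lemma chebJ_U_trig: "chebJ k (1/2) (cos th) * sin th = sin (real (Suc k) * th)"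
  using chebJ_U_trig_aux by blast

lemma chebJ_V_trig_aux: "chebJ k (-1/2) (cos th) * cos (th/2) = cos ((real k + 1/2) * th) \<and>
   chebJ (Suc k) (-1/2) (cos th) * cos (th/2) = cos ((real (Suc k) + 1/2) * th)"
proof (induction k)
  case 0
  have e: "(1 + 1/2) * th = th + th/2" by simp
  have "cos ((1 + 1/2) * th) = cos th * cos (th/2) - sin th * sin (th/2)" unfolding e by (rule cos_add)
  also have "sin th = 2 * sin (th/2) * cos (th/2)" using sin_double[of "th/2"] by simp
  finally have "cos ((1 + 1/2) * th) = cos th * cos (th/2) - 2 * sin (th/2)^2 * cos (th/2)"
    by (simp add: power2_eq_square algebra_simps)
  moreover have c: "cos th = 1 - 2 * sin (th/2)^2" using cos_double_sin[of "th/2"] by simp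
  ultimately show ?case by (simp add: c algebra_simps)
next
  case (Suc j)
  have "cos ((real (Suc (Suc j)) + 1/2) * th) = 2 * cos th * cos ((real (Suc j) + 1/2) * th) - cos ((real j + 1/2) * th)"
  proof -
    have g: "\<And>u. cos (u + th) + cos (u - th) = 2 * cos th * cos u" by (simp add: cos_add cos_diff)
    have "cos ((real (Suc (Suc j)) + 1/2) * th) = cos ((real (Suc j) + 1/2) * th + th)"
      by (simp add: algebra_simps)
    moreover have "cos ((real j + 1/2) * th) = cos ((real (Suc j) + 1/2) * th - th)"
      by (simp add: algebra_simps)
    ultimately show ?thesis using g[of "(real (Suc j) + 1/2) * th"] by linarith
  qed
  then show ?case using Suc by (simp add: algebra_simps)
qed

lemma chebJ_V_trig: "chebJ k (-1/2) (cos th) * cos (th/2) = cos ((real k + 1/2) * th)"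
  using chebJ_V_trig_aux by blast



lemma subst_gen:
  fixes F \<omega> w :: "real \<Rightarrow> real"
  assumes cF: "continuous_on {-1..1} F"
    and c\<omega>: "continuous_on UNIV \<omega>"
    and eq: "\<And>x. -1 < x \<Longrightarrow> x < 1 \<Longrightarrow> F x * \<omega> (arccos x) / sqrt (1 - x\<^sup>2) = F x * w x"
  shows "((\<lambda>x. F x * w x) has_integral integral {0..pi} (\<lambda>t. F (cos t) * \<omega> t)) {-1..1}"
proof -
  define Q where "Q t = F (cos t) * \<omega> t" for t
  have cQ: "continuous_on UNIV Q"
    unfolding Q_def
    by (intro continuous_intros continuous_on_compose2[OF cF] c\<omega>) auto
  define \<Phi> where "\<Phi> u = integral {-1..u} Q" for u
  have dPhi: "(\<Phi> has_real_derivative Q u) (at u)" if "-1 < u" "u < 4" for u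
  proof -
    have "(\<Phi> has_real_derivative Q u) (at u within {-1..4})"
      unfolding \<Phi>_def using that by (intro integral_has_real_derivative continuous_on_subset[OF cQ]) auto
    moreover have "at u within {-1..4} = at u" using that by (intro at_within_Icc_at) auto
    ultimately show ?thesis by simp
  qed
  have cPhi: "continuous_on {-1..4} \<Phi>"
    unfolding \<Phi>_def by (intro indefinite_integral_continuous_1 integrable_continuous_real continuous_on_subset[OF cQ]) auto
  define G where "G x = - \<Phi> (arccos x)" for x
  have cG: "continuous_on {-1..1} G"
    unfolding G_def
  proof (intro continuous_intros continuous_on_compose2[OF cPhi])
    show "arccos ` {-1..1} \<subseteq> {-1..4}"
      using arccos_lbound arccos_ubound pi_less_4 by fastforce
  qed (auto intro: continuous_intros)
  have dG: "(G has_vector_derivative (F x * w x)) (at x)" if "x \<in> {-1<..<1}" for x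
  proof -
    have x: "-1 < x" "x < 1" using that by auto
    have a: "0 < arccos x" "arccos x < pi" using x arccos_lt_bounded by auto
    have "((\<lambda>x. \<Phi> (arccos x)) has_real_derivative Q (arccos x) * inverse (- sqrt (1 - x\<^sup>2))) (at x)"
      by (rule DERIV_chain2[OF dPhi DERIV_arccos[OF x]]) (use a pi_less_4 in auto)
    then have "(G has_real_derivative - (Q (arccos x) * inverse (- sqrt (1 - x\<^sup>2)))) (at x)"
      unfolding G_def by (rule DERIV_minus)
    moreover have "- (Q (arccos x) * inverse (- sqrt (1 - x\<^sup>2))) = F x * w x"
      using eq[OF x] x by (simp add: Q_def cos_arccos divide_inverse)
    ultimately show ?thesis by (simp add: has_real_derivative_iff_has_vector_derivative)
  qed
  have "((\<lambda>x. F x * w x) has_integral (G 1 - G (-1))) {-1..1}"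
    by (rule fundamental_theorem_of_calculus_interior[OF _ cG dG]) auto
  moreover have "G 1 - G (-1) = integral {0..pi} Q"
  proof -
    have "integral {-1..0} Q + integral {0..pi} Q = integral {-1..pi} Q"
      using Henstock_Kurzweil_Integration.integral_combine[where a="-1" and c=0 and b=pi and f=Q] integrable_continuous_real[OF continuous_on_subset[OF cQ], of "-1" pi] by auto
    then show ?thesis unfolding G_def \<Phi>_def by simp
  qed
  ultimately show ?thesis unfolding Q_def by simp
qed



lemma subst_half:
  assumes "continuous_on {-1..1} F"
  shows "((\<lambda>x. F x * (1-x) powr (1/2) * (1+x) powr (1/2)) has_integral
           integral {0..pi} (\<lambda>t. F (cos t) * (sin t)\<^sup>2)) {-1..1}"
proof -
  have "((\<lambda>x. F x * ((1-x) powr (1/2) * (1+x) powr (1/2))) has_integral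
           integral {0..pi} (\<lambda>t. F (cos t) * (sin t)\<^sup>2)) {-1..1}"
  proof (rule subst_gen[OF assms])
    show "continuous_on UNIV (\<lambda>t::real. (sin t)\<^sup>2)" by (rule continuous_on_power[OF continuous_on_sin[OF continuous_on_id]])
  next
    fix x :: real assume x: "-1 < x" "x < 1"
    have s: "(sin (arccos x))\<^sup>2 = 1 - x\<^sup>2" using x by (simp add: sin_arccos abs_square_le_1)
    have p: "1 - x\<^sup>2 > 0" using x by (simp add: abs_square_less_1)
    have "(1-x) powr (1/2) * (1+x) powr (1/2) = sqrt ((1-x)*(1+x))"
      using x by (simp add: powr_half_sqrt real_sqrt_mult)
    also have "(1-x)*(1+x) = 1 - x\<^sup>2" by (simp add: algebra_simps power2_eq_square)
    finally have w: "(1-x) powr (1/2) * (1+x) powr (1/2) = sqrt (1 - x\<^sup>2)" .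
    have "(1 - x\<^sup>2) / sqrt (1 - x\<^sup>2) = sqrt (1 - x\<^sup>2)"
      using p by (metis less_eq_real_def real_div_sqrt)
    then show "F x * (sin (arccos x))\<^sup>2 / sqrt (1 - x\<^sup>2) = F x * ((1-x) powr (1/2) * (1+x) powr (1/2))"
      unfolding s w by (metis times_divide_eq_right)
  qed
  then show ?thesis by (simp add: mult.assoc)
qed

lemma subst_mhalf:
  assumes "continuous_on {-1..1} F"
  shows "((\<lambda>x. F x * (1-x) powr (-1/2) * (1+x) powr (1/2)) has_integral
           integral {0..pi} (\<lambda>t. F (cos t) * (1 + cos t))) {-1..1}"
proof -
  have "((\<lambda>x. F x * ((1-x) powr (-1/2) * (1+x) powr (1/2))) has_integral
           integral {0..pi} (\<lambda>t. F (cos t) * (1 + cos t))) {-1..1}"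
  proof (rule subst_gen[OF assms])
    show "continuous_on UNIV (\<lambda>t::real. 1 + cos t)" by (rule continuous_on_add[OF continuous_on_const continuous_on_cos[OF continuous_on_id]])
  next
    fix x :: real assume x: "-1 < x" "x < 1"
    have c: "cos (arccos x) = x" using x by simp
    have a: "sqrt (1-x) > 0" "sqrt (1+x) > 0" using x by auto
    have "(1-x) powr (-1/2) * (1+x) powr (1/2) = sqrt (1+x) / sqrt (1-x)"
      using x by (simp add: powr_minus_divide powr_half_sqrt)
    also have "\<dots> = (1 + x) / sqrt (1 - x\<^sup>2)"
    proof -
      have "sqrt (1 - x\<^sup>2) = sqrt (1-x) * sqrt (1+x)"
        by (simp add: real_sqrt_mult[symmetric] algebra_simps power2_eq_square)
      moreover have "1 + x = sqrt (1+x) * sqrt (1+x)" using x by simp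
      ultimately show ?thesis using a by (simp add: field_simps)
    qed
    finally show "F x * (1 + cos (arccos x)) / sqrt (1 - x\<^sup>2) = F x * ((1-x) powr (-1/2) * (1+x) powr (1/2))"
      unfolding c by simp
  qed
  then show ?thesis by (simp add: mult.assoc)
qed

lemma int_cos: "((\<lambda>t. cos (of_int n * t)) has_integral (if n = 0 then pi else 0)) {0..pi}"
proof (cases "n = 0")
  case True
  have "((\<lambda>x. 1::real) has_integral pi) {0..pi}"
    using has_integral_const_real[of "1::real" 0 pi] by (simp add: pi_ge_zero)
  then show ?thesis using True by simp
next
  case False
  have "((\<lambda>t. cos (of_int n * t)) has_integral (sin (of_int n * pi) / of_int n - sin (of_int n * 0) / of_int n)) {0..pi}"
  proof (rule fundamental_theorem_of_calculus)
    fix x :: real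
    have "((\<lambda>t. sin (of_int n * t) / of_int n) has_real_derivative (cos (of_int n * x) * (of_int n * 1) / of_int n)) (at x within {0..pi})"
      using \<open>n \<noteq> 0\<close> by (intro derivative_eq_intros) auto
    then show "((\<lambda>t. sin (of_int n * t) / of_int n) has_vector_derivative cos (of_int n * x)) (at x within {0..pi})"
      using False by (simp add: has_real_derivative_iff_has_vector_derivative)
  qed simp
  moreover have "sin (of_int n * pi) = 0" by (simp add: sin_zero_iff_int2)
  ultimately show ?thesis using \<open>n \<noteq> 0\<close> by auto
qed

lemma int_sinsin: "((\<lambda>t. sin (real (Suc j) * t) * sin (real (Suc k) * t)) has_integral (if j = k then pi/2 else 0)) {0..pi}"
proof -
  have e: "sin (real (Suc j) * t) * sin (real (Suc k) * t) =
     (cos (of_int (int j - int k) * t) - cos (of_int (int j + int k + 2) * t)) / 2" for t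
    by (simp add: sin_times_sin algebra_simps)
  have "((\<lambda>t. (cos (of_int (int j - int k) * t) - cos (of_int (int j + int k + 2) * t)) / 2) has_integral
     ((if int j - int k = 0 then pi else 0) - (if int j + int k + 2 = 0 then pi else 0)) / 2) {0..pi}"
    by (intro has_integral_divide has_integral_diff int_cos)
  then show ?thesis unfolding e by (simp split: if_splits)
qed

lemma int_coscos: "((\<lambda>t. cos ((real j + 1/2) * t) * cos ((real k + 1/2) * t)) has_integral (if j = k then pi/2 else 0)) {0..pi}"
proof -
  have e: "cos ((real j + 1/2) * t) * cos ((real k + 1/2) * t) =
     (cos (of_int (int j - int k) * t) + cos (of_int (int j + int k + 1) * t)) / 2" for t
    by (simp add: cos_times_cos algebra_simps)
  have "((\<lambda>t. (cos (of_int (int j - int k) * t) + cos (of_int (int j + int k + 1) * t)) / 2) has_integral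
     ((if int j - int k = 0 then pi else 0) + (if int j + int k + 1 = 0 then pi else 0)) / 2) {0..pi}"
    by (intro has_integral_divide has_integral_add int_cos)
  then show ?thesis unfolding e by (simp split: if_splits)
qed



definition wt :: "real \<Rightarrow> real \<Rightarrow> real" where
  "wt a x = (1-x) powr a * (1+x) powr (1/2)"

lemma wip_wt: "wip a f g = 2 powr (a + 1/2) / pi * integral {-1..1} (\<lambda>x. f x * g x * wt a x)"
  unfolding wip_def wt_def by (simp add: mult.assoc)

lemma wt_nonneg: "wt a x \<ge> 0"
  unfolding wt_def by simp

lemma has_int_half:
  assumes "continuous_on {-1..1} F"
  shows "((\<lambda>x. F x * wt (1/2) x) has_integral integral {0..pi} (\<lambda>t. F (cos t) * (sin t)\<^sup>2)) {-1..1}"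
  using subst_half[OF assms] unfolding wt_def by (simp add: mult.assoc)

lemma has_int_mhalf:
  assumes "continuous_on {-1..1} F"
  shows "((\<lambda>x. F x * wt (-1/2) x) has_integral integral {0..pi} (\<lambda>t. F (cos t) * (1 + cos t))) {-1..1}"
  using subst_mhalf[OF assms] unfolding wt_def by (simp add: mult.assoc)

lemma integrable_wt:
  assumes "a = 1/2 \<or> a = -1/2" "continuous_on {-1..1} F"
  shows "(\<lambda>x. F x * wt a x) integrable_on {-1..1}"
  using assms has_int_half has_int_mhalf by blast

lemma onb_U: "wip (1/2) (chebJ j (1/2)) (chebJ k (1/2)) = (if j = k then 1 else 0)"
proof -
  have c: "continuous_on {-1..1} (\<lambda>x. chebJ j (1/2) x * chebJ k (1/2) x)"
    by (intro continuous_intros chebJ_cont)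
  have e: "chebJ j (1/2) (cos t) * chebJ k (1/2) (cos t) * (sin t)\<^sup>2 = sin (real (Suc j) * t) * sin (real (Suc k) * t)" for t
  proof -
    have "chebJ j (1/2) (cos t) * chebJ k (1/2) (cos t) * (sin t)\<^sup>2 =
      (chebJ j (1/2) (cos t) * sin t) * (chebJ k (1/2) (cos t) * sin t)"
      by (simp add: power2_eq_square algebra_simps)
    also have "\<dots> = sin (real (Suc j) * t) * sin (real (Suc k) * t)"
      by (simp only: chebJ_U_trig)
    finally show ?thesis .
  qed
  have i1: "integral {-1..1} (\<lambda>x. chebJ j (1/2) x * chebJ k (1/2) x * wt (1/2) x) =
     integral {0..pi} (\<lambda>t. chebJ j (1/2) (cos t) * chebJ k (1/2) (cos t) * (sin t)\<^sup>2)"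
    by (rule integral_unique[OF has_int_half[OF c]])
  have i2: "integral {0..pi} (\<lambda>t. chebJ j (1/2) (cos t) * chebJ k (1/2) (cos t) * (sin t)\<^sup>2) = (if j = k then pi/2 else 0)"
    unfolding e by (rule integral_unique[OF int_sinsin])
  show ?thesis unfolding wip_wt i1 i2 by simp
qed

lemma onb_V: "wip (-1/2) (chebJ j (-1/2)) (chebJ k (-1/2)) = (if j = k then 1 else 0)"
proof -
  have c: "continuous_on {-1..1} (\<lambda>x. chebJ j (-1/2) x * chebJ k (-1/2) x)"
    by (intro continuous_intros chebJ_cont)
  have e: "chebJ j (-1/2) (cos t) * chebJ k (-1/2) (cos t) * (1 + cos t) = 2 * (cos ((real j + 1/2) * t) * cos ((real k + 1/2) * t))" for t
  proof -
    have "1 + cos t = 2 * cos (t/2) * cos (t/2)"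
      using cos_double_cos[of "t/2"] by (simp add: power2_eq_square)
    then have "chebJ j (-1/2) (cos t) * chebJ k (-1/2) (cos t) * (1 + cos t) =
       2 * ((chebJ j (-1/2) (cos t) * cos (t/2)) * (chebJ k (-1/2) (cos t) * cos (t/2)))"
      by (simp add: algebra_simps)
    also have "\<dots> = 2 * (cos ((real j + 1/2) * t) * cos ((real k + 1/2) * t))"
      by (simp only: chebJ_V_trig)
    finally show ?thesis .
  qed
  have h2: "((\<lambda>t. 2 * (cos ((real j + 1/2) * t) * cos ((real k + 1/2) * t))) has_integral 2 * (if j = k then pi/2 else 0)) {0..pi}"
    by (intro has_integral_mult_right int_coscos)
  have i1: "integral {-1..1} (\<lambda>x. chebJ j (-1/2) x * chebJ k (-1/2) x * wt (-1/2) x) =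
     integral {0..pi} (\<lambda>t. chebJ j (-1/2) (cos t) * chebJ k (-1/2) (cos t) * (1 + cos t))"
    by (rule integral_unique[OF has_int_mhalf[OF c]])
  have i2: "integral {0..pi} (\<lambda>t. chebJ j (-1/2) (cos t) * chebJ k (-1/2) (cos t) * (1 + cos t)) = 2 * (if j = k then pi/2 else 0)"
    unfolding e by (rule integral_unique[OF h2])
  show ?thesis unfolding wip_wt i1 i2 by simp
qed

lemma bessel_decay:
  fixes w :: "real \<Rightarrow> real" and \<phi> :: "nat \<Rightarrow> real \<Rightarrow> real"
  assumes intg: "\<And>F. continuous_on {-1..1} F \<Longrightarrow> (\<lambda>x. F x * w x) integrable_on {-1..1}"
    and wnn: "\<And>x. w x \<ge> 0"
    and Cpos: "C > 0"
    and cont: "\<And>N. continuous_on {-1..1} (\<phi> N)"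
    and onb: "\<And>j k. C * integral {-1..1} (\<lambda>x. \<phi> j x * \<phi> k x * w x) = (if j = k then 1 else 0)"
    and cg: "continuous_on {-1..1} g"
  shows "(\<lambda>N. C * integral {-1..1} (\<lambda>x. \<phi> N x * g x * w x)) \<longlonglongrightarrow> 0"
proof -
  define c where "c N = C * integral {-1..1} (\<lambda>x. \<phi> N x * g x * w x)" for N
  define IA where "IA = integral {-1..1} (\<lambda>x. g x * g x * w x)"
  have hA: "((\<lambda>x. g x * g x * w x) has_integral IA) {-1..1}"
    unfolding IA_def using intg[of "\<lambda>x. g x * g x"] cg by (auto intro!: continuous_intros)
  have hB: "((\<lambda>x. \<phi> N x * g x * w x) has_integral (c N / C)) {-1..1}" for N
    unfolding c_def using intg[of "\<lambda>x. \<phi> N x * g x"] cg cont[of N] Cpos by (auto intro!: continuous_intros)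
  have hD: "((\<lambda>x. \<phi> N x * \<phi> K x * w x) has_integral ((if N = K then 1 else 0) / C)) {-1..1}" for N K
  proof -
    have "((\<lambda>x. \<phi> N x * \<phi> K x * w x) has_integral integral {-1..1} (\<lambda>x. \<phi> N x * \<phi> K x * w x)) {-1..1}"
      using intg[of "\<lambda>x. \<phi> N x * \<phi> K x"] cont[of N] cont[of K] by (auto intro!: continuous_intros)
    moreover have "integral {-1..1} (\<lambda>x. \<phi> N x * \<phi> K x * w x) = (if N = K then 1 else 0) / C"
      using onb[of N K] Cpos by (simp add: field_simps)
    ultimately show ?thesis by simp
  qed
  have bound: "(\<Sum>N<M. (c N)\<^sup>2) \<le> C * IA" for M
  proof -
    define S where "S x = (\<Sum>N<M. c N * \<phi> N x)" for x
    have pw: "(g x - S x)\<^sup>2 * w x = g x * g x * w x - 2 * (\<Sum>N<M. c N * (\<phi> N x * g x * w x))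
        + (\<Sum>N<M. \<Sum>K<M. c N * c K * (\<phi> N x * \<phi> K x * w x))" for x
    proof -
      have "(g x - S x)\<^sup>2 * w x = g x * g x * w x - 2 * (S x * g x * w x) + S x * S x * w x"
        by (simp add: power2_eq_square algebra_simps)
      moreover have "S x * g x * w x = (\<Sum>N<M. c N * (\<phi> N x * g x * w x))"
        unfolding S_def by (simp add: sum_distrib_right mult.assoc)
      moreover have "S x * S x * w x = (\<Sum>N<M. \<Sum>K<M. c N * c K * (\<phi> N x * \<phi> K x * w x))"
      proof -
        have "S x * S x = (\<Sum>N<M. \<Sum>K<M. (c N * \<phi> N x) * (c K * \<phi> K x))"
          unfolding S_def by (rule sum_product)
        then have "S x * S x * w x = (\<Sum>N<M. \<Sum>K<M. (c N * \<phi> N x) * (c K * \<phi> K x) * w x)"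
          by (simp add: sum_distrib_right)
        then show ?thesis by (simp add: mult_ac)
      qed
      ultimately show ?thesis by simp
    qed
    have hall: "((\<lambda>x. g x * g x * w x - 2 * (\<Sum>N<M. c N * (\<phi> N x * g x * w x))
        + (\<Sum>N<M. \<Sum>K<M. c N * c K * (\<phi> N x * \<phi> K x * w x))) has_integral
        (IA - 2 * (\<Sum>N<M. c N * (c N / C)) + (\<Sum>N<M. \<Sum>K<M. c N * c K * ((if N = K then 1 else 0) / C)))) {-1..1}"
      by (intro has_integral_add has_integral_diff hA has_integral_mult_right has_integral_sum hB hD finite_lessThan)
    have "0 \<le> IA - 2 * (\<Sum>N<M. c N * (c N / C)) + (\<Sum>N<M. \<Sum>K<M. c N * c K * ((if N = K then 1 else 0) / C))"
      by (rule has_integral_nonneg[OF hall]) (metis pw wnn zero_le_power2 mult_nonneg_nonneg)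
    moreover have "(\<Sum>N<M. \<Sum>K<M. c N * c K * ((if N = K then 1 else 0) / C)) = (\<Sum>N<M. c N * (c N / C))"
    proof (rule sum.cong[OF refl])
      fix N assume "N \<in> {..<M}"
      then have "(\<Sum>K<M. c N * c K * ((if N = K then 1 else 0) / C)) = (\<Sum>K\<in>{N}. c N * c K * (1 / C))"
        by (intro sum.mono_neutral_cong_right) auto
      then show "(\<Sum>K<M. c N * c K * ((if N = K then 1 else 0) / C)) = c N * (c N / C)" by simp
    qed
    ultimately have "0 \<le> IA - (\<Sum>N<M. c N * (c N / C))" by simp
    moreover have "(\<Sum>N<M. c N * (c N / C)) = (\<Sum>N<M. (c N)\<^sup>2) / C"
      by (simp add: sum_divide_distrib power2_eq_square)
    ultimately have "(\<Sum>N<M. (c N)\<^sup>2) / C \<le> IA" by linarith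
    then show ?thesis using Cpos by (simp add: pos_divide_le_eq mult.commute)
  qed
  have "summable (\<lambda>N. (c N)\<^sup>2)"
    by (rule summableI_nonneg_bounded[OF _ bound]) simp
  then have "(\<lambda>N. (c N)\<^sup>2) \<longlonglongrightarrow> 0" by (rule summable_LIMSEQ_zero)
  then have "(\<lambda>N. sqrt ((c N)\<^sup>2)) \<longlonglongrightarrow> sqrt 0" by (rule tendsto_real_sqrt)
  then have "(\<lambda>N. \<bar>c N\<bar>) \<longlonglongrightarrow> 0" by simp
  then show ?thesis unfolding c_def[symmetric] by (rule tendsto_rabs_zero_cancel)
qed

lemma decay_U:
  assumes "continuous_on {-1..1} g"
  shows "(\<lambda>N. wip (1/2) (chebJ N (1/2)) g) \<longlonglongrightarrow> 0"
  unfolding wip_wt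
  by (rule bessel_decay[OF integrable_wt _ _ chebJ_cont _ assms])
     (use onb_U wt_nonneg in \<open>auto simp: wip_wt\<close>)

lemma decay_V:
  assumes "continuous_on {-1..1} g"
  shows "(\<lambda>N. wip (-1/2) (chebJ N (-1/2)) g) \<longlonglongrightarrow> 0"
  unfolding wip_wt
  by (rule bessel_decay[OF integrable_wt _ _ chebJ_cont _ assms])
     (use onb_V wt_nonneg in \<open>auto simp: wip_wt\<close>)



lemma taypoly_at1: "(\<Sum>j<Suc k. a j / fact j * (1 - 1::real) ^ j) = a 0"
  by (induction k) simp_all

lemma deriv_taypoly:
  "((\<lambda>x::real. \<Sum>j<Suc k. a j / fact j * (x-1)^j) has_real_derivative (\<Sum>j<k. a (Suc j) / fact j * (x-1)^j)) (at x)"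
proof (induction k)
  case 0 then show ?case by simp
next
  case (Suc k)
  have "((\<lambda>x::real. a (Suc k) / fact (Suc k) * (x-1)^(Suc k)) has_real_derivative
      a (Suc k) / fact (Suc k) * (real (Suc k) * (x-1)^k * 1)) (at x)"
    by (intro derivative_eq_intros) auto
  moreover have "a (Suc k) / fact (Suc k) * (real (Suc k) * (x-1)^k * 1) = a (Suc k) / fact k * (x-1)^k"
  proof -
    have g: "\<And>s f y b::real. s > 0 \<Longrightarrow> f > 0 \<Longrightarrow> b / (s*f) * (s*y*1) = b/f*y" by (simp add: field_simps)
    have "(fact (Suc k)::real) = real (Suc k) * fact k" by (simp add: fact_Suc)
    then show ?thesis using g[of "real (Suc k)" "fact k"] by simp
  qed
  ultimately have "((\<lambda>x::real. a (Suc k) / fact (Suc k) * (x-1)^(Suc k)) has_real_derivative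
      a (Suc k) / fact k * (x-1)^k) (at x)" by simp
  from DERIV_add[OF Suc.IH this] show ?case
    by (simp add: sum.lessThan_Suc)
qed

lemma taylor_lim:
  fixes F :: "nat \<Rightarrow> real \<Rightarrow> real"
  assumes d: "\<And>j x. x \<in> {-1..1} \<Longrightarrow> (F j has_real_derivative F (Suc j) x) (at x within {-1..1})"
  shows "((\<lambda>x. (F 0 x - (\<Sum>j<k. F j 1 / fact j * (x-1)^j)) / (x-1)^k) \<longlongrightarrow> F k 1 / fact k) (at_left 1)"
  using d
proof (induction k arbitrary: F)
  case 0
  have "continuous (at 1 within {-1..1}) (F 0)" by (rule DERIV_continuous[OF 0]) auto
  then have "(F 0 \<longlongrightarrow> F 0 1) (at_left 1)"
    by (simp add: continuous_within at_within_Icc_at_left)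
  then show ?case by simp
next
  case (Suc k)
  note d = Suc.prems
  have cont: "(F 0 \<longlongrightarrow> F 0 1) (at_left 1)"
  proof -
    have "continuous (at 1 within {-1..1}) (F 0)" by (rule DERIV_continuous[OF d]) auto
    then show ?thesis by (simp add: continuous_within at_within_Icc_at_left)
  qed
  have IH: "((\<lambda>x. (F 1 x - (\<Sum>j<k. F (Suc j) 1 / fact j * (x-1)^j)) / (x-1)^k) \<longlongrightarrow> F (Suc k) 1 / fact k) (at_left 1)"
    using Suc.IH[of "\<lambda>j. F (Suc j)"] d by simp
  have ev: "eventually (\<lambda>x. x \<in> {-1<..<1}) (at_left (1::real))"
    by (rule eventually_at_left_real) simp
  have "((\<lambda>x. (F 0 x - (\<Sum>j<Suc k. F j 1 / fact j * (x-1)^j)) / (x-1)^(Suc k)) \<longlongrightarrow> F (Suc k) 1 / fact (Suc k)) (at_left 1)"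
  proof (rule lhopital_left[where f' = "\<lambda>x. F 1 x - (\<Sum>j<k. F (Suc j) 1 / fact j * (x-1)^j)"
        and g' = "\<lambda>x. real (Suc k) * (x-1)^k"])
    have "((\<lambda>x. F 0 x - (\<Sum>j<Suc k. F j 1 / fact j * (x-1)^j)) \<longlongrightarrow>
        F 0 1 - (\<Sum>j<Suc k. F j 1 / fact j * (1-1)^j)) (at_left 1)"
      by (intro tendsto_intros cont)
    then show "((\<lambda>x. F 0 x - (\<Sum>j<Suc k. F j 1 / fact j * (x-1)^j)) \<longlongrightarrow> 0) (at_left 1)"
      by (simp only: taypoly_at1) simp
    have "((\<lambda>x::real. (x-1)^(Suc k)) \<longlongrightarrow> (1-1)^(Suc k)) (at_left 1)"
      by (intro tendsto_intros)
    then show "((\<lambda>x::real. (x-1)^(Suc k)) \<longlongrightarrow> 0) (at_left 1)" by simp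
    show "eventually (\<lambda>x::real. (x-1)^(Suc k) \<noteq> 0) (at_left 1)"
      using ev by eventually_elim auto
    show "eventually (\<lambda>x::real. real (Suc k) * (x-1)^k \<noteq> 0) (at_left 1)"
      using ev by eventually_elim auto
    show "eventually (\<lambda>x. ((\<lambda>x. F 0 x - (\<Sum>j<Suc k. F j 1 / fact j * (x-1)^j)) has_real_derivative
        F 1 x - (\<Sum>j<k. F (Suc j) 1 / fact j * (x-1)^j)) (at x)) (at_left 1)"
      using ev
    proof eventually_elim
      case (elim x)
      have "(F 0 has_real_derivative F 1 x) (at x within {-1..1})" using d elim by auto
      moreover have "at x within {-1..1} = at x" using elim by (intro at_within_Icc_at) auto
      ultimately have "(F 0 has_real_derivative F 1 x) (at x)" by simp
      then show ?case
        using DERIV_diff[OF _ deriv_taypoly[of "\<lambda>j. F j 1" k x]] by auto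
    qed
    show "eventually (\<lambda>x. ((\<lambda>x::real. (x-1)^(Suc k)) has_real_derivative real (Suc k) * (x-1)^k) (at x)) (at_left 1)"
    proof (intro always_eventually allI)
      fix x :: real
      show "((\<lambda>x::real. (x-1)^(Suc k)) has_real_derivative real (Suc k) * (x-1)^k) (at x)"
      proof -
        have "((\<lambda>x::real. x - 1) has_real_derivative 1) (at x)" by (auto intro!: derivative_eq_intros)
        from DERIV_power[OF this, of "Suc k"] show ?thesis by simp
      qed
    qed
    have "((\<lambda>x. (F 1 x - (\<Sum>j<k. F (Suc j) 1 / fact j * (x-1)^j)) / (x-1)^k / real (Suc k)) \<longlongrightarrow>
         F (Suc k) 1 / fact k / real (Suc k)) (at_left 1)"
      by (intro tendsto_divide IH tendsto_const) auto
    moreover have "F (Suc k) 1 / fact k / real (Suc k) = F (Suc k) 1 / fact (Suc k)"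
      by (simp add: fact_Suc field_simps)
    ultimately show "filterlim (\<lambda>x. (F 1 x - (\<Sum>j<k. F (Suc j) 1 / fact j * (x-1)^j)) / (real (Suc k) * (x-1)^k))
        (nhds (F (Suc k) 1 / fact (Suc k))) (at_left 1)"
      by (simp add: field_simps)
  qed
  then show ?case .
qed



definition gfun :: "(real \<Rightarrow> real) \<Rightarrow> (nat \<Rightarrow> real \<Rightarrow> real) \<Rightarrow> int \<Rightarrow> real \<Rightarrow> real" where
  "gfun E D m x = (x - 1) powi m * taylor_rem E D (- m) x"

lemma smooth_D_cont:
  assumes "smooth_with_derivs E D" "x \<in> {-1..1}"
  shows "continuous (at x within {-1..1}) (D j)"
  using assms unfolding smooth_with_derivs_def by (blast intro: DERIV_continuous)

lemma smooth_E_cont: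
  assumes "smooth_with_derivs E D"
  shows "continuous_on {-1..1} E"
proof -
  have "continuous_on {-1..1} (D 0)"
    using smooth_D_cont[OF assms] by (simp add: continuous_on_eq_continuous_within)
  moreover have "\<And>x. x \<in> {-1..1} \<Longrightarrow> D 0 x = E x" using assms unfolding smooth_with_derivs_def by auto
  ultimately show ?thesis using continuous_on_cong by blast
qed

lemma taylor_rem_nat: "taylor_rem E D (int j) x = E x - (\<Sum>i<j. D i 1 / fact i * (x - 1) ^ i)"
  unfolding taylor_rem_def by (cases "j = 0") auto

lemma gtilde:
  assumes sm: "smooth_with_derivs E D"
  shows "\<exists>G. continuous_on {-1..1} G \<and> (\<forall>x\<in>{-1..<1}. G x = gfun E D m x)"
proof (cases "m \<ge> 0")
  case True
  have e: "gfun E D m x = (x-1)^(nat m) * E x" for x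
    using True unfolding gfun_def taylor_rem_def by (simp add: power_int_def)
  show ?thesis
    by (rule exI[of _ "\<lambda>x. (x-1)^(nat m) * E x"])
       (auto simp: e intro!: continuous_intros smooth_E_cont[OF sm])
next
  case False
  define k where "k = nat (-m)"
  have mk: "m = - int k" "k > 0" using False unfolding k_def by auto
  define Qt where "Qt x = (D 0 x - (\<Sum>j<k. D j 1 / fact j * (x-1)^j)) / (x-1)^k" for x
  define G where "G x = (if x = 1 then D k 1 / fact k else Qt x)" for x
  have DE: "D 0 x = E x" if "x \<in> {-1..1}" for x using sm that unfolding smooth_with_derivs_def by auto
  have mk2: "- m = int k" using mk by simp
  have gQ: "gfun E D m x = Qt x" if "x \<in> {-1..1}" "x \<noteq> 1" for x
    using that unfolding gfun_def Qt_def mk2 taylor_rem_nat unfolding mk(1)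
    by (simp add: DE power_int_minus divide_inverse mult.commute)
  have d: "\<And>j x. x \<in> {-1..1} \<Longrightarrow> (D j has_real_derivative D (Suc j) x) (at x within {-1..1})"
    using sm unfolding smooth_with_derivs_def by auto
  have lim: "(Qt \<longlongrightarrow> D k 1 / fact k) (at_left 1)"
    unfolding Qt_def by (rule taylor_lim[where F=D, OF d])
  have "continuous (at x within {-1..1}) G" if x: "x \<in> {-1..1}" for x
  proof (cases "x = 1")
    case True
    have "(G \<longlongrightarrow> D k 1 / fact k) (at_left 1)"
    proof (rule Lim_transform_eventually[OF lim])
      show "eventually (\<lambda>y. Qt y = G y) (at_left 1)"
        unfolding G_def by (auto simp: eventually_at_filter)
    qed
    then show ?thesis using True by (simp add: continuous_within at_within_Icc_at_left G_def)
  next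
    case False
    have cQ: "continuous (at x within {-1..1}) Qt"
      unfolding Qt_def using False
      by (intro continuous_intros smooth_D_cont[OF sm x]) auto
    have ev: "eventually (\<lambda>y. y \<noteq> 1) (at x within {-1..1})"
      unfolding eventually_at using False
      by (intro exI[of _ "\<bar>x - 1\<bar>"]) (auto simp: dist_real_def)
    have "(G \<longlongrightarrow> Qt x) (at x within {-1..1})"
    proof (rule Lim_transform_eventually)
      show "(Qt \<longlongrightarrow> Qt x) (at x within {-1..1})" using cQ by (simp add: continuous_within)
      show "eventually (\<lambda>y. Qt y = G y) (at x within {-1..1})"
        using ev by eventually_elim (simp add: G_def)
    qed
    then show ?thesis using False by (simp add: continuous_within G_def)
  qed
  then have "continuous_on {-1..1} G" by (simp add: continuous_on_eq_continuous_within)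
  moreover have "\<forall>x\<in>{-1..<1}. G x = gfun E D m x" using gQ by (auto simp: G_def)
  ultimately show ?thesis by blast
qed

lemma gfun_rel:
  assumes "x \<in> {-1..<1}"
  shows "gfun E D m x = (x - 1) * gfun E D (m - 1) x + (if m \<le> 0 then D (nat (-m)) 1 / fact (nat (-m)) else 0)"
proof -
  have y: "x - 1 \<noteq> 0" using assms by auto
  have pw: "(x-1) powi m = (x-1) * (x-1) powi (m-1)"
    using power_int_add[of "x-1" 1 "m-1"] y by simp
  show ?thesis
  proof (cases "m \<le> 0")
    case False
    then show ?thesis unfolding gfun_def taylor_rem_def using pw by simp
  next
    case True
    define j where "j = nat (-m)"
    have mj: "-m = int j" "1 - m = int (Suc j)" using True unfolding j_def by auto
    have r: "taylor_rem E D (- (m-1)) x = taylor_rem E D (- m) x - D j 1 / fact j * (x-1)^j"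
    proof -
      have e1: "- (m - 1) = int (Suc j)" using mj by simp
      show ?thesis unfolding e1 mj(1) taylor_rem_nat by simp
    qed
    have inv: "(x-1) powi m * (x-1)^j = 1"
    proof -
      have "m = - int j" using mj by simp
      then show ?thesis using y by (simp add: power_int_minus)
    qed
    have "(x - 1) * gfun E D (m - 1) x = (x-1) powi m * (taylor_rem E D (- m) x - D j 1 / fact j * (x-1)^j)"
      unfolding gfun_def r using pw by (simp add: mult.assoc)
    also have "\<dots> = gfun E D m x - D j 1 / fact j * ((x-1) powi m * (x-1)^j)"
      unfolding gfun_def by (simp add: algebra_simps)
    finally show ?thesis using inv True j_def by simp
  qed
qed



lemma wip_cong:
  assumes "\<And>x. x \<in> {-1..<1} \<Longrightarrow> f x * g x = f' x * g' x"
  shows "wip a f g = wip a f' g'"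
proof -
  have "integral {-1..1} (\<lambda>x. f' x * g' x * (1 - x) powr a * (1 + x) powr (1/2)) =
        integral {-1..1} (\<lambda>x. f x * g x * (1 - x) powr a * (1 + x) powr (1/2))"
    by (rule integral_spike[of "{1}"]) (use assms in auto)
  then show ?thesis unfolding wip_def by simp
qed

lemma wt_shift: "x \<le> 1 \<Longrightarrow> (1 - x) * wt (-1/2) x = wt (1/2) x"
proof (cases "x = 1")
  case True then show ?thesis by (simp add: wt_def)
next
  case False
  assume "x \<le> 1"
  then have p: "1 - x > 0" using False by simp
  have "(1-x) powr (1/2) = (1-x) powr (1 + -1/2)" by simp
  also have "\<dots> = (1-x) powr 1 * (1-x) powr (-1/2)" by (rule powr_add)
  also have "\<dots> = (1 - x) * (1-x) powr (-1/2)" using p by simp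
  finally have f: "(1-x) powr (1/2) = (1 - x) * (1-x) powr (-1/2)" .
  show ?thesis unfolding wt_def f by (simp only: mult.assoc)
qed

lemma Psi_gfun: "Psi E D n m t = wip (alpha_idx n) (chebJ t (alpha_idx n)) (gfun E D m)"
  unfolding Psi_def gfun_def[abs_def] by simp

lemma int_wt_mhalf: "continuous_on {-1..1} F \<Longrightarrow> (\<lambda>x. F x * wt (-1/2) x) integrable_on {-1..1}"
  using integrable_wt[of "-1/2" F] by simp

lemma int_wt_half: "continuous_on {-1..1} F \<Longrightarrow> (\<lambda>x. F x * wt (1/2) x) integrable_on {-1..1}"
  using integrable_wt[of "1/2" F] by simp

lemma even_step:
  assumes cG: "continuous_on {-1..1} G"
  shows "wip (1/2) (chebJ t (1/2)) G = wip (-1/2) (chebJ t (-1/2)) G - wip (-1/2) (chebJ (Suc t) (-1/2)) G"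
proof -
  have i1: "(\<lambda>x. chebJ t (-1/2) x * G x * wt (-1/2) x) integrable_on {-1..1}"
    by (rule int_wt_mhalf) (intro continuous_intros chebJ_cont cG)
  have i2: "(\<lambda>x. chebJ (Suc t) (-1/2) x * G x * wt (-1/2) x) integrable_on {-1..1}"
    by (rule int_wt_mhalf) (intro continuous_intros chebJ_cont cG)
  have "integral {-1..1} (\<lambda>x. chebJ t (-1/2) x * G x * wt (-1/2) x) - integral {-1..1} (\<lambda>x. chebJ (Suc t) (-1/2) x * G x * wt (-1/2) x)
      = integral {-1..1} (\<lambda>x. chebJ t (-1/2) x * G x * wt (-1/2) x - chebJ (Suc t) (-1/2) x * G x * wt (-1/2) x)"
    by (rule integral_diff[OF i1 i2, symmetric])
  also have "\<dots> = integral {-1..1} (\<lambda>x. 2 * (chebJ t (1/2) x * G x * wt (1/2) x))"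
  proof (rule integral_cong)
    fix x :: real assume x: "x \<in> {-1..1}"
    have "chebJ t (-1/2) x * G x * wt (-1/2) x - chebJ (Suc t) (-1/2) x * G x * wt (-1/2) x
       = (chebJ t (-1/2) x - chebJ (Suc t) (-1/2) x) * G x * wt (-1/2) x" by (simp add: algebra_simps)
    also have "\<dots> = 2 * chebJ t (1/2) x * G x * ((1 - x) * wt (-1/2) x)"
      by (simp only: chebJ_tel[symmetric]) (simp add: algebra_simps)
    also have "\<dots> = 2 * (chebJ t (1/2) x * G x * wt (1/2) x)"
      using x wt_shift[of x] by simp
    finally show "chebJ t (-1/2) x * G x * wt (-1/2) x - chebJ (Suc t) (-1/2) x * G x * wt (-1/2) x
       = 2 * (chebJ t (1/2) x * G x * wt (1/2) x)" .
  qed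
  also have "\<dots> = 2 * integral {-1..1} (\<lambda>x. chebJ t (1/2) x * G x * wt (1/2) x)"
    by simp
  finally show ?thesis unfolding wip_wt by (simp add: algebra_simps diff_divide_distrib[symmetric])
qed

lemma odd_step:
  assumes cH: "continuous_on {-1..1} H"
  shows "2 * wip (-1/2) (chebJ (Suc t) (-1/2)) (\<lambda>x. (x - 1) * H x + c) =
     wip (1/2) (chebJ t (1/2)) H - wip (1/2) (chebJ (Suc t) (1/2)) H"
proof -
  have i1: "(\<lambda>x. chebJ (Suc t) (-1/2) x * ((x - 1) * H x) * wt (-1/2) x) integrable_on {-1..1}"
    by (rule int_wt_mhalf) (intro continuous_intros chebJ_cont cH)
  have i2: "(\<lambda>x. chebJ (Suc t) (-1/2) x * chebJ 0 (-1/2) x * wt (-1/2) x) integrable_on {-1..1}"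
    by (rule int_wt_mhalf) (intro continuous_intros chebJ_cont)
  have i3: "(\<lambda>x. chebJ (Suc t) (1/2) x * H x * wt (1/2) x) integrable_on {-1..1}"
    by (rule int_wt_half) (intro continuous_intros chebJ_cont cH)
  have i4: "(\<lambda>x. chebJ t (1/2) x * H x * wt (1/2) x) integrable_on {-1..1}"
    by (rule int_wt_half) (intro continuous_intros chebJ_cont cH)
  have z: "integral {-1..1} (\<lambda>x. chebJ (Suc t) (-1/2) x * chebJ 0 (-1/2) x * wt (-1/2) x) = 0"
    using onb_V[of "Suc t" 0] unfolding wip_wt by simp
  have "integral {-1..1} (\<lambda>x. chebJ (Suc t) (-1/2) x * ((x - 1) * H x + c) * wt (-1/2) x)
     = integral {-1..1} (\<lambda>x. chebJ (Suc t) (-1/2) x * ((x - 1) * H x) * wt (-1/2) x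
          + c * (chebJ (Suc t) (-1/2) x * chebJ 0 (-1/2) x * wt (-1/2) x))"
    by (rule integral_cong) (simp add: algebra_simps)
  also have "\<dots> = integral {-1..1} (\<lambda>x. chebJ (Suc t) (-1/2) x * ((x - 1) * H x) * wt (-1/2) x)"
    using integral_add[OF i1 integrable_on_cmult_left[OF i2, of c]] z by simp
  also have "\<dots> = integral {-1..1} (\<lambda>x. chebJ t (1/2) x * H x * wt (1/2) x - chebJ (Suc t) (1/2) x * H x * wt (1/2) x)"
  proof (rule integral_cong)
    fix x :: real assume x: "x \<in> {-1..1}"
    have "chebJ (Suc t) (-1/2) x * ((x - 1) * H x) * wt (-1/2) x =
        - ((chebJ (Suc t) (1/2) x - chebJ t (1/2) x) * H x * ((1 - x) * wt (-1/2) x))"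
      by (simp only: chebJ_V_U) (simp add: algebra_simps)
    also have "\<dots> = chebJ t (1/2) x * H x * wt (1/2) x - chebJ (Suc t) (1/2) x * H x * wt (1/2) x"
    proof -
      have ws: "(1 - x) * wt (-1/2) x = wt (1/2) x" using x by (intro wt_shift) auto
      show ?thesis unfolding ws by (simp add: algebra_simps)
    qed
    finally show "chebJ (Suc t) (-1/2) x * ((x - 1) * H x) * wt (-1/2) x =
        chebJ t (1/2) x * H x * wt (1/2) x - chebJ (Suc t) (1/2) x * H x * wt (1/2) x" .
  qed
  also have "\<dots> = integral {-1..1} (\<lambda>x. chebJ t (1/2) x * H x * wt (1/2) x) - integral {-1..1} (\<lambda>x. chebJ (Suc t) (1/2) x * H x * wt (1/2) x)"
    by (rule integral_diff[OF i4 i3])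
  finally show ?thesis unfolding wip_wt by (simp add: algebra_simps diff_divide_distrib[symmetric])
qed



theorem proposition3p1:
  fixes E :: "real \<Rightarrow> real" and D :: "nat \<Rightarrow> real \<Rightarrow> real"
    and n :: nat and l :: int and s :: nat
  assumes "smooth_with_derivs E D"
    and "n \<ge> 1"
  shows "(\<lambda>t. phi_idx (n - 1) s t * Psi E D n (int (r_idx n) - l) t)
           sums Psi E D (n - 1) (int (r_idx (n - 1)) - l) s"
proof -
  note sm = assms(1)
  define k where "k = n - 1"
  define m where "m = int (r_idx n) - l"
  show ?thesis
  proof (cases "even n")
    case True
    then obtain q where q: "n = 2 * q" by (auto elim: evenE)
    then have q1: "q \<ge> 1" using assms(2) by simp
    have al: "alpha_idx n = 1/2" "alpha_idx k = -1/2" using True assms(2)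
      by (auto simp: alpha_idx_def k_def)
    have ph: "phi_idx k s t = (if s \<le> t then 1 else 0)" for t
      using True assms(2) by (auto simp: phi_idx_def k_def)
    have rr: "r_idx k = r_idx n" using q q1 unfolding r_idx_def k_def by (cases q) auto
    obtain G where cG: "continuous_on {-1..1} G" and eG: "\<forall>x\<in>{-1..<1}. G x = gfun E D m x"
      using gtilde[OF sm] by blast
    define b where "b t = wip (-1/2) (chebJ t (-1/2)) G" for t
    have psi: "Psi E D n m t = b t - b (Suc t)" for t
    proof -
      have "Psi E D n m t = wip (1/2) (chebJ t (1/2)) G"
        unfolding Psi_gfun al by (rule wip_cong) (use eG in auto)
      then show ?thesis unfolding b_def using even_step[OF cG] by simp
    qed
    have tgt: "Psi E D k m s = b s"
      unfolding Psi_gfun al b_def by (rule wip_cong) (use eG in auto)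
    have ps: "(\<Sum>t<N. phi_idx k s t * Psi E D n m t) = b s - b N" if "s \<le> N" for N
      using that
    proof (induction N rule: dec_induct)
      case base
      have "(\<Sum>t<s. phi_idx k s t * Psi E D n m t) = 0"
        by (intro sum.neutral) (auto simp: ph)
      then show ?case by simp
    next
      case (step N) then show ?case by (simp add: ph psi)
    qed
    have lim: "b \<longlonglongrightarrow> 0" unfolding b_def using decay_V[OF cG] by simp
    have "(\<lambda>N. \<Sum>t<N. phi_idx k s t * Psi E D n m t) \<longlonglongrightarrow> b s - 0"
    proof (rule Lim_transform_eventually[OF tendsto_diff[OF tendsto_const lim]])
      show "eventually (\<lambda>N. b s - b N = (\<Sum>t<N. phi_idx k s t * Psi E D n m t)) sequentially"
        by (rule eventually_mono[OF eventually_ge_at_top[of s]]) (simp add: ps)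
    qed
    then show ?thesis unfolding sums_def m_def[symmetric] k_def[symmetric] rr tgt by simp
  next
    case False
    then obtain q where q: "n = 2 * q + 1" by (auto elim: oddE)
    have al: "alpha_idx n = -1/2" "alpha_idx k = 1/2" using False q
      by (auto simp: alpha_idx_def k_def)
    have ph: "phi_idx k s t = 2 * (if s < t then 1 else 0)" for t
      using q by (auto simp: phi_idx_def k_def)
    have rr: "int (r_idx k) - l = m - 1" unfolding m_def r_idx_def k_def using q by simp
    obtain G where cG: "continuous_on {-1..1} G" and eG: "\<forall>x\<in>{-1..<1}. G x = gfun E D m x"
      using gtilde[OF sm] by blast
    obtain H where cH: "continuous_on {-1..1} H" and eH: "\<forall>x\<in>{-1..<1}. H x = gfun E D (m - 1) x"
      using gtilde[OF sm] by blast
    define c where "c = (if m \<le> 0 then D (nat (-m)) 1 / fact (nat (-m)) else 0)"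
    define e where "e t = wip (1/2) (chebJ t (1/2)) H" for t
    have psi: "2 * Psi E D n m (Suc t) = e t - e (Suc t)" for t
    proof -
      have "Psi E D n m (Suc t) = wip (-1/2) (chebJ (Suc t) (-1/2)) (\<lambda>x. (x - 1) * H x + c)"
        unfolding Psi_gfun al
      proof (rule wip_cong)
        fix x :: real assume x: "x \<in> {-1..<1}"
        show "chebJ (Suc t) (-1/2) x * gfun E D m x = chebJ (Suc t) (-1/2) x * ((x - 1) * H x + c)"
          using gfun_rel[OF x, of E D m] eH x unfolding c_def by simp
      qed
      then show ?thesis unfolding e_def using odd_step[OF cH] by simp
    qed
    have tgt: "Psi E D k (m - 1) s = e s"
      unfolding Psi_gfun al e_def by (rule wip_cong) (use eH in auto)
    have ps: "(\<Sum>t<Suc N. phi_idx k s t * Psi E D n m t) = e s - e N" if "s \<le> N" for N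
      using that
    proof (induction N rule: dec_induct)
      case base
      have "(\<Sum>t<Suc s. phi_idx k s t * Psi E D n m t) = 0"
        by (intro sum.neutral) (auto simp: ph)
      then show ?case by simp
    next
      case (step N)
      have "(\<Sum>t<Suc (Suc N). phi_idx k s t * Psi E D n m t) =
          (\<Sum>t<Suc N. phi_idx k s t * Psi E D n m t) + phi_idx k s (Suc N) * Psi E D n m (Suc N)"
        by simp
      also have "phi_idx k s (Suc N) * Psi E D n m (Suc N) = e N - e (Suc N)"
        using step psi[of N] by (simp add: ph)
      finally show ?case using step by simp
    qed
    have lim: "e \<longlonglongrightarrow> 0" unfolding e_def using decay_U[OF cH] by simp
    have "(\<lambda>N. \<Sum>t<Suc N. phi_idx k s t * Psi E D n m t) \<longlonglongrightarrow> e s - 0"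
    proof (rule Lim_transform_eventually[OF tendsto_diff[OF tendsto_const lim]])
      show "eventually (\<lambda>N. e s - e N = (\<Sum>t<Suc N. phi_idx k s t * Psi E D n m t)) sequentially"
        by (rule eventually_mono[OF eventually_ge_at_top[of s]]) (metis ps)
    qed
    then have "(\<lambda>N. \<Sum>t<N. phi_idx k s t * Psi E D n m t) \<longlonglongrightarrow> e s"
      using filterlim_sequentially_Suc[where f="\<lambda>N. \<Sum>t<N. phi_idx k s t * Psi E D n m t" and F="nhds (e s)"]
      by simp
    then show ?thesis unfolding sums_def m_def[symmetric] k_def[symmetric] rr tgt .
  qed
qed


end
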